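(* Let $\mathcal{C}$ be a Fraïssé class of finite structures over a finite relational language, all of whose members are rigid, with Fraïssé limit $M$, and suppose that $\mathcal{C}$ contains exactly one $2$-element structure up to isomorphism. Then either $M$ has a reduct which is a total order, or there exist $A,B\in\mathcal{C}$ with $|A|=2$ and $|B|=3$ such that for every $C\in\mathcal{C}$ there is a $2$-colouring of the embeddings $A\to C$ for which no embedding $B\to C$ is monochromatic (so $\mathcal{C}$ is not a Ramsey class).
   Context: All structures are non-empty, and classes are closed under isomorphism and hereditary. A Fraïssé class is a hereditary class with the joint embedding and amalgamation properties; its Fraïssé limit is the unique countable homogeneous structure with age $\mathcal{C}$. A reduct of $M$ which is a total order means a strict total order on the domain of $M$ definable in $M$ by a first-order formula without parameters. An embedding $g:B\to C$ is monochromatic for a colouring of the embeddings $A\to C$ if all embeddings $A\to C$ with image contained in the image of $g$ get the same colour. $\mathcal{C}$ is a Ramsey class if for all $A,B\in\mathcal{C}$ there is $C\in\mathcal{C}$ such that every $2$-colouring of the embeddings $A\to C$ admits a monochromatic embedding $B\to C$. *)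

theory Defs
  imports "HOL-Library.FuncSet"
begin

text \<open>Elements are natural numbers (every finite or countable
  structure has an isomorphic copy on nat).\<close>

record 'r rstruct =
  dom :: "nat set"
  rel :: "'r \<Rightarrow> nat list \<Rightarrow> bool"

definition is_struct :: "'r set \<Rightarrow> ('r \<Rightarrow> nat) \<Rightarrow> 'r rstruct \<Rightarrow> bool" where
  "is_struct L ar A \<longleftrightarrow> dom A \<noteq> {} \<and>
     (\<forall>R xs. rel A R xs \<longrightarrow> R \<in> L \<and> length xs = ar R \<and> set xs \<subseteq> dom A)"

definition emb :: "'r set \<Rightarrow> 'r rstruct \<Rightarrow> 'r rstruct \<Rightarrow> (nat \<Rightarrow> nat) set" where
  "emb L A B = {f \<in> dom A \<rightarrow>\<^sub>E dom B. inj_on f (dom A) \<and>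
     (\<forall>R\<in>L. \<forall>xs. set xs \<subseteq> dom A \<longrightarrow> (rel A R xs \<longleftrightarrow> rel B R (map f xs)))}"

definition iso :: "'r set \<Rightarrow> 'r rstruct \<Rightarrow> 'r rstruct \<Rightarrow> (nat \<Rightarrow> nat) set" where
  "iso L A B = {f \<in> emb L A B. f ` dom A = dom B}"

definition isomorphic :: "'r set \<Rightarrow> 'r rstruct \<Rightarrow> 'r rstruct \<Rightarrow> bool" where
  "isomorphic L A B \<longleftrightarrow> iso L A B \<noteq> {}"

definition rigid :: "'r set \<Rightarrow> 'r rstruct \<Rightarrow> bool" where
  "rigid L A \<longleftrightarrow> (\<forall>f\<in>iso L A A. \<forall>x\<in>dom A. f x = x)"

definition substr :: "'r rstruct \<Rightarrow> nat set \<Rightarrow> 'r rstruct" where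
  "substr A S = \<lparr>dom = S, rel = (\<lambda>R xs. rel A R xs \<and> set xs \<subseteq> S)\<rparr>"

definition hereditary_class :: "'r set \<Rightarrow> ('r \<Rightarrow> nat) \<Rightarrow> 'r rstruct set \<Rightarrow> bool" where
  "hereditary_class L ar \<C> \<longleftrightarrow>
     (\<forall>A\<in>\<C>. is_struct L ar A \<and> finite (dom A)) \<and>
     (\<forall>A\<in>\<C>. \<forall>B. is_struct L ar B \<and> isomorphic L A B \<longrightarrow> B \<in> \<C>) \<and>
     (\<forall>A\<in>\<C>. \<forall>S. S \<subseteq> dom A \<and> S \<noteq> {} \<longrightarrow> substr A S \<in> \<C>)"

definition JEP :: "'r set \<Rightarrow> 'r rstruct set \<Rightarrow> bool" where
  "JEP L \<C> \<longleftrightarrow> (\<forall>A\<in>\<C>. \<forall>B\<in>\<C>. \<exists>D\<in>\<C>. emb L A D \<noteq> {} \<and> emb L B D \<noteq> {})"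

definition AP :: "'r set \<Rightarrow> 'r rstruct set \<Rightarrow> bool" where
  "AP L \<C> \<longleftrightarrow> (\<forall>A\<in>\<C>. \<forall>B1\<in>\<C>. \<forall>B2\<in>\<C>. \<forall>f1\<in>emb L A B1. \<forall>f2\<in>emb L A B2.
      \<exists>D\<in>\<C>. \<exists>g1\<in>emb L B1 D. \<exists>g2\<in>emb L B2 D. \<forall>x\<in>dom A. g1 (f1 x) = g2 (f2 x))"

definition fraisse_class :: "'r set \<Rightarrow> ('r \<Rightarrow> nat) \<Rightarrow> 'r rstruct set \<Rightarrow> bool" where
  "fraisse_class L ar \<C> \<longleftrightarrow> \<C> \<noteq> {} \<and> hereditary_class L ar \<C> \<and> JEP L \<C> \<and> AP L \<C>"

definition age :: "'r set \<Rightarrow> ('r \<Rightarrow> nat) \<Rightarrow> 'r rstruct \<Rightarrow> 'r rstruct set" where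
  "age L ar M = {A. is_struct L ar A \<and> finite (dom A) \<and> emb L A M \<noteq> {}}"

definition homogeneous :: "'r set \<Rightarrow> 'r rstruct \<Rightarrow> bool" where
  "homogeneous L M \<longleftrightarrow> (\<forall>S T h. S \<subseteq> dom M \<and> T \<subseteq> dom M \<and> finite S \<and> S \<noteq> {} \<and>
      h \<in> iso L (substr M S) (substr M T) \<longrightarrow>
      (\<exists>\<sigma>\<in>iso L M M. \<forall>x\<in>S. \<sigma> x = h x))"

text \<open>Fraisse limit: countable (automatic, elements are nat) homogeneous structure with age C.\<close>
definition fraisse_limit :: "'r set \<Rightarrow> ('r \<Rightarrow> nat) \<Rightarrow> 'r rstruct set \<Rightarrow> 'r rstruct \<Rightarrow> bool" where
  "fraisse_limit L ar \<C> M \<longleftrightarrow> is_struct L ar M \<and> homogeneous L M \<and> age L ar M = \<C>"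

datatype 'r fo =
    FEq nat nat
  | FRel 'r "nat list"
  | FNeg "'r fo"
  | FAnd "'r fo" "'r fo"
  | FEx nat "'r fo"

fun fv :: "'r fo \<Rightarrow> nat set" where
  "fv (FEq i j) = {i, j}"
| "fv (FRel R vs) = set vs"
| "fv (FNeg \<phi>) = fv \<phi>"
| "fv (FAnd \<phi> \<psi>) = fv \<phi> \<union> fv \<psi>"
| "fv (FEx v \<phi>) = fv \<phi> - {v}"

fun syms :: "'r fo \<Rightarrow> 'r set" where
  "syms (FEq i j) = {}"
| "syms (FRel R vs) = {R}"
| "syms (FNeg \<phi>) = syms \<phi>"
| "syms (FAnd \<phi> \<psi>) = syms \<phi> \<union> syms \<psi>"
| "syms (FEx v \<phi>) = syms \<phi>"

fun sat :: "'r rstruct \<Rightarrow> (nat \<Rightarrow> nat) \<Rightarrow> 'r fo \<Rightarrow> bool" where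
  "sat M \<sigma> (FEq i j) = (\<sigma> i = \<sigma> j)"
| "sat M \<sigma> (FRel R vs) = rel M R (map \<sigma> vs)"
| "sat M \<sigma> (FNeg \<phi>) = (\<not> sat M \<sigma> \<phi>)"
| "sat M \<sigma> (FAnd \<phi> \<psi>) = (sat M \<sigma> \<phi> \<and> sat M \<sigma> \<psi>)"
| "sat M \<sigma> (FEx v \<phi>) = (\<exists>a\<in>dom M. sat M (\<sigma>(v := a)) \<phi>)"

text \<open>The binary relation defined in M by a formula with free variables among 0 (for x) and 1 (for y).\<close>
definition defined_rel :: "'r rstruct \<Rightarrow> 'r fo \<Rightarrow> nat \<Rightarrow> nat \<Rightarrow> bool" where
  "defined_rel M \<phi> a b \<longleftrightarrow> sat M ((\<lambda>_. a)(1 := b)) \<phi>"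

definition strict_total_order_on :: "nat set \<Rightarrow> (nat \<Rightarrow> nat \<Rightarrow> bool) \<Rightarrow> bool" where
  "strict_total_order_on X r \<longleftrightarrow>
     (\<forall>x\<in>X. \<not> r x x) \<and>
     (\<forall>x\<in>X. \<forall>y\<in>X. \<forall>z\<in>X. r x y \<and> r y z \<longrightarrow> r x z) \<and>
     (\<forall>x\<in>X. \<forall>y\<in>X. x \<noteq> y \<longrightarrow> r x y \<or> r y x)"

definition has_total_order_reduct :: "'r set \<Rightarrow> 'r rstruct \<Rightarrow> bool" where
  "has_total_order_reduct L M \<longleftrightarrow> (\<exists>\<phi>. fv \<phi> \<subseteq> {0, 1} \<and> syms \<phi> \<subseteq> L \<and>
      strict_total_order_on (dom M) (defined_rel M \<phi>))"

definition monochromatic :: "'r set \<Rightarrow> 'r rstruct \<Rightarrow> 'r rstruct \<Rightarrow> ((nat \<Rightarrow> nat) \<Rightarrow> bool)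
    \<Rightarrow> 'r rstruct \<Rightarrow> (nat \<Rightarrow> nat) \<Rightarrow> bool" where
  "monochromatic L A C \<chi> B g \<longleftrightarrow>
     (\<exists>c. \<forall>f\<in>emb L A C. f ` dom A \<subseteq> g ` dom B \<longrightarrow> \<chi> f = c)"

end

theory Submission
  imports Defs
begin

lemma emb_to_substr:
  assumes "e \<in> emb L A M" "e ` dom A \<subseteq> S"
  shows "e \<in> emb L A (substr M S)"
proof -
  have "\<forall>R\<in>L. \<forall>xs. set xs \<subseteq> dom A \<longrightarrow> (rel A R xs \<longleftrightarrow> rel M R (map e xs) \<and> set (map e xs) \<subseteq> S)"
    using assms unfolding emb_def by (auto simp: subset_iff)
  then show ?thesis using assms unfolding emb_def substr_def by (auto simp: PiE_def Pi_def)
qed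

lemma emb_from_substr:
  assumes "e \<in> emb L A (substr M S)" "S \<subseteq> dom M"
  shows "e \<in> emb L A M"
proof -
  have ss: "e ` dom A \<subseteq> S" using assms(1) unfolding emb_def substr_def by (auto simp: PiE_def Pi_def)
  have "\<forall>R\<in>L. \<forall>xs. set xs \<subseteq> dom A \<longrightarrow> (rel A R xs \<longleftrightarrow> rel M R (map e xs))"
  proof (intro ballI allI impI)
    fix R xs assume "R \<in> L" "set xs \<subseteq> dom A"
    then have "rel A R xs \<longleftrightarrow> rel M R (map e xs) \<and> set (map e xs) \<subseteq> S"
      using assms(1) unfolding emb_def substr_def by auto
    moreover have "set (map e xs) \<subseteq> S" using ss \<open>set xs \<subseteq> dom A\<close> by auto
    ultimately show "rel A R xs \<longleftrightarrow> rel M R (map e xs)" by simp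
  qed
  then show ?thesis using assms unfolding emb_def substr_def by (auto simp: PiE_def Pi_def)
qed

lemma substr_in_age:
  assumes "is_struct L ar M" "S \<subseteq> dom M" "S \<noteq> {}" "finite S"
  shows "substr M S \<in> age L ar M"
proof -
  have st: "is_struct L ar (substr M S)"
    using assms(1,3) unfolding is_struct_def substr_def by auto
  have "restrict id S \<in> emb L (substr M S) M"
  proof -
    have "\<And>xs. set xs \<subseteq> S \<Longrightarrow> map (restrict id S) xs = xs"
      by (simp add: map_idI subset_iff)
    then show ?thesis using assms(2) unfolding emb_def substr_def by (auto simp: inj_on_def)
  qed
  then show ?thesis using st assms unfolding age_def substr_def by auto
qed

lemma emb_comp:
  assumes "e \<in> emb L A B" "g \<in> emb L B C"
  shows "restrict (g \<circ> e) (dom A) \<in> emb L A C"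
proof -
  have e1: "e ` dom A \<subseteq> dom B" using assms(1) unfolding emb_def by (auto simp: PiE_def Pi_def)
  have "\<forall>R\<in>L. \<forall>xs. set xs \<subseteq> dom A \<longrightarrow> (rel A R xs \<longleftrightarrow> rel C R (map (restrict (g \<circ> e) (dom A)) xs))"
  proof (intro ballI allI impI)
    fix R xs assume R: "R \<in> L" and xs: "set xs \<subseteq> dom A"
    have m: "map (restrict (g \<circ> e) (dom A)) xs = map g (map e xs)"
      using xs by (simp add: subset_iff)
    have "set (map e xs) \<subseteq> dom B" using e1 xs by auto
    then have "rel A R xs \<longleftrightarrow> rel C R (map g (map e xs))"
      using assms R xs unfolding emb_def by auto
    then show "rel A R xs \<longleftrightarrow> rel C R (map (restrict (g \<circ> e) (dom A)) xs)"
      by (simp only: m)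
  qed
  moreover have "inj_on (restrict (g \<circ> e) (dom A)) (dom A)"
    using assms e1 unfolding emb_def inj_on_def by (auto simp: subset_iff)
  moreover have "restrict (g \<circ> e) (dom A) \<in> dom A \<rightarrow>\<^sub>E dom C"
    using assms e1 unfolding emb_def by (auto simp: PiE_def Pi_def subset_iff)
  ultimately show ?thesis unfolding emb_def by blast
qed

theorem corollary1p6:
  fixes L :: "'r set" and ar :: "'r \<Rightarrow> nat"
    and \<C> :: "'r rstruct set" and M :: "'r rstruct"
  assumes "finite L"
    and "fraisse_class L ar \<C>"
    and "\<forall>A\<in>\<C>. rigid L A"
    and "fraisse_limit L ar \<C> M"
    and "\<exists>A\<in>\<C>. card (dom A) = 2 \<and> (\<forall>B\<in>\<C>. card (dom B) = 2 \<longrightarrow> isomorphic L A B)"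
  shows "has_total_order_reduct L M \<or>
    (\<exists>A\<in>\<C>. \<exists>B\<in>\<C>. card (dom A) = 2 \<and> card (dom B) = 3 \<and>
       (\<forall>C\<in>\<C>. \<exists>\<chi> :: (nat \<Rightarrow> nat) \<Rightarrow> bool.
          \<forall>g\<in>emb L B C. \<not> monochromatic L A C \<chi> B g))"
proof -
  obtain A where A: "A \<in> \<C>" "card (dom A) = 2" and uniq: "\<forall>B\<in>\<C>. card (dom B) = 2 \<longrightarrow> isomorphic L A B"
    using assms(5) by blast
  obtain a0 b0 where ab: "dom A = {a0, b0}" "a0 \<noteq> b0" using A(2) by (meson card_2_iff)
  have rig: "rigid L A" using assms(3) A(1) by blast
  have Mst: "is_struct L ar M" and age: "age L ar M = \<C>" using assms(4) unfolding fraisse_limit_def by auto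
  define s where "s = restrict (\<lambda>z. if z = a0 then b0 else a0) (dom A)"
  have sA: "\<And>z. z \<in> dom A \<Longrightarrow> s z \<in> dom A" unfolding s_def using ab by auto
  obtain R xs where R: "R \<in> L" "set xs \<subseteq> dom A" "rel A R xs \<noteq> rel A R (map s xs)"
  proof -
    have "\<exists>R\<in>L. \<exists>xs. set xs \<subseteq> dom A \<and> rel A R xs \<noteq> rel A R (map s xs)"
    proof (rule ccontr)
      assume "\<not> ?thesis"
      then have h: "\<forall>R\<in>L. \<forall>xs. set xs \<subseteq> dom A \<longrightarrow> (rel A R xs \<longleftrightarrow> rel A R (map s xs))" by blast
      have "s \<in> dom A \<rightarrow>\<^sub>E dom A" using sA unfolding s_def by auto
      moreover have "inj_on s (dom A)" unfolding s_def using ab by (auto simp: inj_on_def)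
      moreover have "s ` dom A = dom A" unfolding s_def using ab by auto
      ultimately have "s \<in> iso L A A" using h unfolding iso_def emb_def by blast
      then have "s a0 = a0" using rig ab unfolding rigid_def by blast
      then show False using ab unfolding s_def by auto
    qed
    then show ?thesis using that by blast
  qed
  define c where "c = rel A R xs"
  have ncs: "rel A R (map s xs) = (\<not> c)" using R(3) unfolding c_def by blast
  define P where "P x y = rel M R (map (\<lambda>z. if z = a0 then x else y) xs)" for x y
  define T where "T x y = (x \<noteq> y \<and> P x y = c)" for x y
  have embP: "P (e a0) (e b0) = c \<and> P (e b0) (e a0) = (\<not> c)" if e: "e \<in> emb L A M" for e
  proof -
    have m1: "map (\<lambda>z. if z = a0 then e a0 else e b0) xs = map e xs"
      using R(2) ab by (auto simp: subset_iff)
    have m2: "map (\<lambda>z. if z = a0 then e b0 else e a0) xs = map e (map s xs)"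
      using R(2) ab by (auto simp: subset_iff s_def)
    have ss: "set (map s xs) \<subseteq> dom A" using R(2) sA by auto
    have "rel A R xs = rel M R (map e xs)" using e R unfolding emb_def by blast
    moreover have "rel A R (map s xs) = rel M R (map e (map s xs))" using e R(1) ss unfolding emb_def by blast
    ultimately show ?thesis unfolding P_def m1 m2 c_def using ncs c_def by simp
  qed
  have two: "\<exists>e\<in>emb L A M. (e a0 = x \<and> e b0 = y) \<or> (e a0 = y \<and> e b0 = x)"
    if xy: "x \<in> dom M" "y \<in> dom M" "x \<noteq> y" for x y
  proof -
    have "substr M {x, y} \<in> \<C>" using substr_in_age[OF Mst, of "{x,y}"] xy age by auto
    moreover have "card (dom (substr M {x, y})) = 2" using xy unfolding substr_def by auto
    ultimately obtain h where h: "h \<in> iso L A (substr M {x, y})"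
      using uniq unfolding isomorphic_def by blast
    then have he: "h \<in> emb L A M" using emb_from_substr[of h L A M "{x,y}"] xy unfolding iso_def by auto
    have "h ` {a0, b0} = {x, y}" using h ab unfolding iso_def substr_def by auto
    then have "(h a0 = x \<and> h b0 = y) \<or> (h a0 = y \<and> h b0 = x)" using xy by (auto simp: doubleton_eq_iff)
    then show ?thesis using he by blast
  qed
  have Tiff: "T x y \<longleftrightarrow> (\<exists>e\<in>emb L A M. e a0 = x \<and> e b0 = y)"
    if xy: "x \<in> dom M" "y \<in> dom M" for x y
  proof
    assume "\<exists>e\<in>emb L A M. e a0 = x \<and> e b0 = y"
    then obtain e where e: "e \<in> emb L A M" "e a0 = x" "e b0 = y" by blast
    have "x \<noteq> y" using e ab unfolding emb_def inj_on_def by auto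
    then show "T x y" using embP[OF e(1)] e unfolding T_def by auto
  next
    assume t: "T x y"
    then obtain e where e: "e \<in> emb L A M" "(e a0 = x \<and> e b0 = y) \<or> (e a0 = y \<and> e b0 = x)"
      using two[OF xy] unfolding T_def by blast
    show "\<exists>e\<in>emb L A M. e a0 = x \<and> e b0 = y"
    proof (cases "e a0 = x \<and> e b0 = y")
      case True then show ?thesis using e by blast
    next
      case False
      then have "e a0 = y" "e b0 = x" using e by auto
      then show ?thesis using embP[OF e(1)] t unfolding T_def by auto
    qed
  qed
  have total: "T x y \<or> T y x" if "x \<in> dom M" "y \<in> dom M" "x \<noteq> y" for x y
    using two[OF that] Tiff that by blast
  have asym: "\<not> T y x" if hxy: "x \<in> dom M" "y \<in> dom M" "T x y" for x y
  proof
    assume "T y x"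
    obtain e where e: "e \<in> emb L A M" "e a0 = x" "e b0 = y" using Tiff hxy by blast
    show False using embP[OF e(1)] e \<open>T y x\<close> unfolding T_def by auto
  qed
  show ?thesis
  proof (cases "strict_total_order_on (dom M) T")
    case True
    define ys where "ys = map (\<lambda>z. if z = a0 then 0 else (1::nat)) xs"
    define \<phi> where "\<phi> = FAnd (FNeg (FEq 0 1)) (if c then FRel R ys else FNeg (FRel R ys))"
    have fv: "fv \<phi> \<subseteq> {0, 1}" unfolding \<phi>_def ys_def by auto
    have sy: "syms \<phi> \<subseteq> L" unfolding \<phi>_def using R(1) by auto
    have "defined_rel M \<phi> = T"
    proof (intro ext)
      fix x y :: nat
      have "map ((\<lambda>_. x)(1 := y)) ys = map (\<lambda>z. if z = a0 then x else y) xs"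
        unfolding ys_def by auto
      then show "defined_rel M \<phi> x y = T x y"
        unfolding defined_rel_def \<phi>_def T_def P_def by auto
    qed
    then have "has_total_order_reduct L M" unfolding has_total_order_reduct_def
      using fv sy True by metis
    then show ?thesis by blast
  next
    case False
    have irr: "\<forall>x\<in>dom M. \<not> T x x" unfolding T_def by auto
    have tot: "\<forall>x\<in>dom M. \<forall>y\<in>dom M. x \<noteq> y \<longrightarrow> T x y \<or> T y x" using total by blast
    obtain x y z where xyz: "x \<in> dom M" "y \<in> dom M" "z \<in> dom M" "T x y" "T y z" "\<not> T x z"
      using False irr tot unfolding strict_total_order_on_def by blast
    have xz: "x \<noteq> z" using asym xyz by blast
    have Tzx: "T z x" using total xyz xz by blast
    have dist: "x \<noteq> y" "y \<noteq> z" using xyz unfolding T_def by auto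
    define S where "S = {x, y, z}"
    define B where "B = substr M S"
    have SM: "S \<subseteq> dom M" unfolding S_def using xyz by auto
    have BC: "B \<in> \<C>" using substr_in_age[OF Mst SM] age unfolding B_def S_def by auto
    have cB: "card (dom B) = 3" unfolding B_def substr_def S_def using dist xz by auto
    have "\<forall>C\<in>\<C>. \<exists>\<chi> :: (nat \<Rightarrow> nat) \<Rightarrow> bool. \<forall>g\<in>emb L B C. \<not> monochromatic L A C \<chi> B g"
    proof (intro ballI exI[of _ "\<lambda>f. f a0 < f b0"])
      fix C g assume g: "g \<in> emb L B C"
      show "\<not> monochromatic L A C (\<lambda>f. f a0 < f b0) B g"
      proof
        assume "monochromatic L A C (\<lambda>f. f a0 < f b0) B g"
        then obtain col where col: "\<forall>f\<in>emb L A C. f ` dom A \<subseteq> g ` dom B \<longrightarrow> (f a0 < f b0) = col"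
          unfolding monochromatic_def by blast
        have key: "(g u < g v) = col" if uv: "u \<in> S" "v \<in> S" "T u v" for u v
        proof -
          obtain e where e: "e \<in> emb L A M" "e a0 = u" "e b0 = v" using Tiff uv SM by blast
          have eS: "e ` dom A \<subseteq> S" using ab e uv by auto
          have eB: "e \<in> emb L A B" unfolding B_def using emb_to_substr[OF e(1) eS] .
          define f where "f = restrict (g \<circ> e) (dom A)"
          have f: "f \<in> emb L A C" unfolding f_def using emb_comp[OF eB g] .
          have "f ` dom A \<subseteq> g ` dom B" unfolding f_def B_def substr_def using eS by auto
          then have "(f a0 < f b0) = col" using col f by blast
          then show ?thesis unfolding f_def using ab e by simp
        qed
        have k1: "(g x < g y) = col" using key xyz unfolding S_def by auto
        have k2: "(g y < g z) = col" using key xyz unfolding S_def by auto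
        have k3: "(g z < g x) = col" using key Tzx unfolding S_def by auto
        have "inj_on g S" using g unfolding emb_def B_def substr_def by auto
        then have "g x \<noteq> g y" "g y \<noteq> g z" "g x \<noteq> g z"
          using dist xz unfolding S_def inj_on_def by auto
        then show False using k1 k2 k3 by (cases col) auto
      qed
    qed
    then show ?thesis using A BC cB by blast
  qed
qed

end
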